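(* Let $p\geq 0$ be an integer, let $T$ be a tree with at least $p$ vertices and $H$ a connected graph with at least $2p$ vertices. Let $V\subseteq V(T(H))$ with $OC(T,V)=V(T)$, and let $V_1,V_2$ be a partition of $V$ with $|V_i|\leq |V(T(H))|-p^2$ for each $i\in\{1,2\}$. Then $T(H)$ has a matching of size $p$ in which the two ends of each edge have different roles with respect to $V_1,V_2$.
   Context: Graph $T(H)$: for a tree $T$ and a graph $H$ with $V(H)=\{1,\dots,m\}$, $T(H)$ has vertices $v^i$ ($v\in V(T)$, $1\le i\le m$); for each $v$ the vertices $v^1,\dots,v^m$ span a copy $H^v$ of $H$, and $u^iv^i$ is an edge for each $i$ whenever $uv\in E(T)$. $OC(T,V)=\{u\in V(T): V(H^u)\cap V\neq\emptyset\}$. Roles with respect to $V_1,V_2$: each vertex of $T(H)$ either belongs to $V_1$, belongs to $V_2$, or belongs to $V(T(H))\setminus V$; these are its three possible roles. *)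

theory Defs
  imports Main
begin

definition simple_graph :: "'v set \<Rightarrow> 'v set set \<Rightarrow> bool" where
  "simple_graph V E \<longleftrightarrow> finite V \<and> (\<forall>e\<in>E. e \<subseteq> V \<and> card e = 2)"

definition adj :: "'v set set \<Rightarrow> 'v \<Rightarrow> 'v \<Rightarrow> bool" where
  "adj E x y \<longleftrightarrow> {x, y} \<in> E"

definition connected_graph :: "'v set \<Rightarrow> 'v set set \<Rightarrow> bool" where
  "connected_graph V E \<longleftrightarrow> simple_graph V E \<and> V \<noteq> {} \<and>
     (\<forall>x\<in>V. \<forall>y\<in>V. (adj E)\<^sup>*\<^sup>* x y)"

definition is_cycle :: "'v set set \<Rightarrow> 'v list \<Rightarrow> bool" where
  "is_cycle E cs \<longleftrightarrow> length cs \<ge> 3 \<and> distinct cs \<and>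
     (\<forall>i. Suc i < length cs \<longrightarrow> adj E (cs ! i) (cs ! Suc i)) \<and>
     adj E (last cs) (hd cs)"

definition acyclic_graph :: "'v set set \<Rightarrow> bool" where
  "acyclic_graph E \<longleftrightarrow> (\<nexists>cs. is_cycle E cs)"

definition is_tree :: "'v set \<Rightarrow> 'v set set \<Rightarrow> bool" where
  "is_tree V E \<longleftrightarrow> connected_graph V E \<and> acyclic_graph E"

text \<open>The graph T(H), for T = (VT, ET) and H with vertex set {1..m} and edge set EH.
  Vertex v^i is represented as the pair (v, i).\<close>

definition TH_verts :: "'a set \<Rightarrow> nat \<Rightarrow> ('a \<times> nat) set" where
  "TH_verts VT m = VT \<times> {1..m}"

definition TH_edges :: "'a set \<Rightarrow> 'a set set \<Rightarrow> nat \<Rightarrow> nat set set \<Rightarrow> ('a \<times> nat) set set" where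
  "TH_edges VT ET m EH =
     {{(v, i), (v, j)} | v i j. v \<in> VT \<and> {i, j} \<in> EH} \<union>
     {{(u, i), (v, i)} | u v i. {u, v} \<in> ET \<and> i \<in> {1..m}}"

definition OC :: "'a set \<Rightarrow> nat \<Rightarrow> ('a \<times> nat) set \<Rightarrow> 'a set" where
  "OC VT m V = {u \<in> VT. \<exists>i\<in>{1..m}. (u, i) \<in> V}"

definition role :: "'b set \<Rightarrow> 'b set \<Rightarrow> 'b \<Rightarrow> nat" where
  "role V1 V2 x = (if x \<in> V1 then 1 else if x \<in> V2 then 2 else 0)"

definition matching :: "'b set set \<Rightarrow> 'b set set \<Rightarrow> bool" where
  "matching E M \<longleftrightarrow> M \<subseteq> E \<and> (\<forall>e\<in>M. \<forall>f\<in>M. e \<noteq> f \<longrightarrow> e \<inter> f = {})"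

end

theory Submission
  imports Defs
begin

lemma bichrom_edge:
  assumes "(adj E)\<^sup>*\<^sup>* x y" "f x \<noteq> f y"
  shows "\<exists>a b. {a, b} \<in> E \<and> f a \<noteq> f b"
  using assms
proof (induction rule: rtranclp_induct)
  case base
  then show ?case by simp
next
  case (step z y)
  show ?case
  proof (cases "f x = f z")
    case True
    then show ?thesis using step by (auto simp: adj_def)
  next
    case False
    then show ?thesis using step by blast
  qed
qed

lemma pick_matching:
  assumes "finite I" "card I \<ge> p"
    and "\<forall>k\<in>I. g k \<in> E \<and> g k \<noteq> {} \<and> P (g k)"
    and "\<forall>k\<in>I. \<forall>l\<in>I. k \<noteq> l \<longrightarrow> g k \<inter> g l = {}"
  shows "\<exists>M. matching E M \<and> card M = p \<and> (\<forall>e\<in>M. P e)"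
proof -
  obtain J where J: "J \<subseteq> I" "card J = p"
    using obtain_subset_with_card_n[OF assms(2)] by blast
  have inj: "inj_on g J"
  proof (rule inj_onI)
    fix k l assume "k \<in> J" "l \<in> J" "g k = g l"
    then show "k = l" using assms(3,4) J(1) by blast
  qed
  have "matching E (g ` J)"
    unfolding matching_def
  proof (intro conjI ballI impI)
    show "g ` J \<subseteq> E" using assms(3) J(1) by blast
  next
    fix e f assume "e \<in> g ` J" "f \<in> g ` J" "e \<noteq> f"
    then obtain k l where "k \<in> J" "l \<in> J" "e = g k" "f = g l" "k \<noteq> l" by blast
    then show "e \<inter> f = {}" using assms(4) J(1) by blast
  qed
  moreover have "card (g ` J) = p" using card_image[OF inj] J by simp
  moreover have "\<forall>e\<in>g ` J. P e" using assms(3) J(1) by blast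
  ultimately show ?thesis by blast
qed

theorem lemma2:
  fixes p m :: nat and VT :: "'a set" and ET :: "'a set set" and EH :: "nat set set"
    and V V1 V2 :: "('a \<times> nat) set"
  assumes tree: "is_tree VT ET" and Tsize: "card VT \<ge> p"
    and Hconn: "connected_graph {1..m} EH" and Hsize: "m \<ge> 2 * p"
    and Vsub: "V \<subseteq> TH_verts VT m"
    and OCall: "OC VT m V = VT"
    and part: "V1 \<union> V2 = V" "V1 \<inter> V2 = {}"
    and size1: "card V1 \<le> card (TH_verts VT m) - p^2"
    and size2: "card V2 \<le> card (TH_verts VT m) - p^2"
  shows "\<exists>M. matching (TH_edges VT ET m EH) M \<and> card M = p \<and>
           (\<forall>e\<in>M. \<forall>x\<in>e. \<forall>y\<in>e. x \<noteq> y \<longrightarrow> role V1 V2 x \<noteq> role V1 V2 y)"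
proof -
  let ?E = "TH_edges VT ET m EH"
  let ?r = "role V1 V2"
  define P where "P = (\<lambda>e::('a \<times> nat) set. \<forall>x\<in>e. \<forall>y\<in>e. x \<noteq> y \<longrightarrow> ?r x \<noteq> ?r y)"
  have Tc: "connected_graph VT ET" using tree by (simp add: is_tree_def)
  have finVT: "finite VT" using Tc by (simp add: connected_graph_def simple_graph_def)
  have Tconn: "\<And>x y. x \<in> VT \<Longrightarrow> y \<in> VT \<Longrightarrow> (adj ET)\<^sup>*\<^sup>* x y"
    using Tc by (simp add: connected_graph_def)
  have Hc: "\<And>x y. x \<in> {1..m} \<Longrightarrow> y \<in> {1..m} \<Longrightarrow> (adj EH)\<^sup>*\<^sup>* x y"
    using Hconn by (simp add: connected_graph_def)
  define A where "A = {u\<in>VT. \<exists>i\<in>{1..m}. \<exists>j\<in>{1..m}. ?r (u,i) \<noteq> ?r (u,j)}"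
  define B where "B = {i\<in>{1..m}. \<exists>u\<in>VT. \<exists>v\<in>VT. ?r (u,i) \<noteq> ?r (v,i)}"
  have finA: "finite A" using finVT by (simp add: A_def)
  have finB: "finite B" by (simp add: B_def)
  show ?thesis
  proof (cases "card A \<ge> p")
    case True
    have "\<forall>u\<in>A. \<exists>e. (e \<in> ?E \<and> e \<noteq> {} \<and> P e) \<and> e \<subseteq> {u} \<times> UNIV"
    proof
      fix u assume u: "u \<in> A"
      then obtain i j where ij: "i \<in> {1..m}" "j \<in> {1..m}" "?r (u,i) \<noteq> ?r (u,j)"
        and uV: "u \<in> VT" by (auto simp: A_def)
      obtain a b where ab: "{a,b} \<in> EH" "?r (u,a) \<noteq> ?r (u,b)"
        using bichrom_edge[OF Hc[OF ij(1,2)], of "\<lambda>k. ?r (u,k)"] ij(3) by blast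
      have "{(u,a),(u,b)} \<in> ?E" unfolding TH_edges_def using ab(1) uV by blast
      moreover have "P {(u,a),(u,b)}" using ab(2) by (auto simp: P_def)
      ultimately show "\<exists>e. (e \<in> ?E \<and> e \<noteq> {} \<and> P e) \<and> e \<subseteq> {u} \<times> UNIV" by blast
    qed
    then obtain g where g: "\<forall>u\<in>A. (g u \<in> ?E \<and> g u \<noteq> {} \<and> P (g u)) \<and> g u \<subseteq> {u} \<times> UNIV"
      by metis
    have "\<forall>k\<in>A. \<forall>l\<in>A. k \<noteq> l \<longrightarrow> g k \<inter> g l = {}" using g by blast
    then show ?thesis using pick_matching[OF finA True, of g ?E P] g unfolding P_def by blast
  next
    case notA: False
    show ?thesis
    proof (cases "card B \<ge> p")
      case True
      have "\<forall>i\<in>B. \<exists>e. (e \<in> ?E \<and> e \<noteq> {} \<and> P e) \<and> e \<subseteq> UNIV \<times> {i}"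
      proof
        fix i assume i: "i \<in> B"
        then obtain u v where uv: "u \<in> VT" "v \<in> VT" "?r (u,i) \<noteq> ?r (v,i)"
          and iV: "i \<in> {1..m}" by (auto simp: B_def)
        obtain a b where ab: "{a,b} \<in> ET" "?r (a,i) \<noteq> ?r (b,i)"
          using bichrom_edge[OF Tconn[OF uv(1,2)], of "\<lambda>k. ?r (k,i)"] uv(3) by blast
        have "{(a,i),(b,i)} \<in> ?E" unfolding TH_edges_def using ab(1) iV by blast
        moreover have "P {(a,i),(b,i)}" using ab(2) by (auto simp: P_def)
        ultimately show "\<exists>e. (e \<in> ?E \<and> e \<noteq> {} \<and> P e) \<and> e \<subseteq> UNIV \<times> {i}" by blast
      qed
      then obtain g where g: "\<forall>i\<in>B. (g i \<in> ?E \<and> g i \<noteq> {} \<and> P (g i)) \<and> g i \<subseteq> UNIV \<times> {i}"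
        by metis
      have "\<forall>k\<in>B. \<forall>l\<in>B. k \<noteq> l \<longrightarrow> g k \<inter> g l = {}" using g by blast
      then show ?thesis using pick_matching[OF finB True, of g ?E P] g unfolding P_def by blast
    next
      case notB: False
      have p1: "p \<ge> 1" using notA by simp
      have cA: "card A \<le> p - 1" and cB: "card B \<le> p - 1" using notA notB by auto
      have "A \<subseteq> VT" by (auto simp: A_def)
      have "card A < card VT" using notA Tsize by simp
      then obtain u0 where u0: "u0 \<in> VT" "u0 \<notin> A"
        using \<open>A \<subseteq> VT\<close> by (metis psubsetI psubset_imp_ex_mem card_mono finVT less_le_not_le subsetI)
      have "B \<subseteq> {1..m}" by (auto simp: B_def)
      have "card B < card {1..m}" using notB Hsize by simp
      then obtain i1 where i1: "i1 \<in> {1..m}" "i1 \<notin> B"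
        using finB card_mono[OF finB, of "{1..m}"] by (meson not_less subsetI)
      obtain i0 where i0: "i0 \<in> {1..m}" "(u0,i0) \<in> V"
        using OCall u0(1) unfolding OC_def by blast
      define c where "c = ?r (u0,i0)"
      have c12: "c = 1 \<or> c = 2" using i0(2) part by (auto simp: c_def role_def)
      have rowu0: "\<And>i. i \<in> {1..m} \<Longrightarrow> ?r (u0,i) = c"
        using u0 i0(1) unfolding A_def c_def by blast
      have layer: "\<And>v. v \<in> VT \<Longrightarrow> ?r (v,i1) = c"
        using i1 u0(1) rowu0[OF i1(1)] unfolding B_def by blast
      define S where "S = VT \<times> {1..m} - A \<times> B"
      have Sc: "\<forall>x\<in>S. ?r x = c"
      proof
        fix x assume "x \<in> S"
        then obtain v i where x: "x = (v,i)" "v \<in> VT" "i \<in> {1..m}" "v \<notin> A \<or> i \<notin> B"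
          unfolding S_def by blast
        show "?r x = c"
        proof (cases "v \<notin> A")
          case True
          then have "?r (v,i) = ?r (v,i1)" using x i1(1) unfolding A_def by blast
          then show ?thesis using layer[OF x(2)] x(1) by simp
        next
          case False
          then have "i \<notin> B" using x by blast
          then have "?r (v,i) = ?r (u0,i)" using x u0(1) unfolding B_def by blast
          then show ?thesis using rowu0[OF x(3)] x(1) by simp
        qed
      qed
      have ABsub: "A \<times> B \<subseteq> VT \<times> {1..m}" using \<open>A \<subseteq> VT\<close> \<open>B \<subseteq> {1..m}\<close> by blast
      have cardS: "card S = card VT * m - card A * card B"
        unfolding S_def using card_Diff_subset[OF finite_cartesian_product[OF finA finB] ABsub]
        by (simp add: card_cartesian_product)
      have "card A * card B \<le> (p-1)*(p-1)" using cA cB mult_le_mono by blast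
      moreover have "(p-1)*(p-1) < p*p" using p1 by (simp add: mult_strict_mono)
      moreover have "p * p \<le> card VT * m" using Tsize Hsize mult_le_mono by fastforce
      ultimately have big: "card S > card VT * m - p^2" unfolding cardS power2_eq_square by linarith
      have finTH: "finite (TH_verts VT m)" using finVT by (simp add: TH_verts_def)
      have cTH: "card (TH_verts VT m) = card VT * m" by (simp add: TH_verts_def card_cartesian_product)
      show ?thesis
      proof (cases "c = 1")
        case True
        have "S \<subseteq> V1" using Sc True by (auto simp: role_def split: if_splits)
        moreover have "finite V1" using finTH Vsub part(1) finite_subset by blast
        ultimately have "card S \<le> card V1" by (simp add: card_mono)
        then show ?thesis using size1 big cTH by linarith
      next
        case False
        then have "c = 2" using c12 by simp
        then have "S \<subseteq> V2" using Sc by (auto simp: role_def split: if_splits)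
        moreover have "finite V2" using finTH Vsub part(1) finite_subset by blast
        ultimately have "card S \<le> card V2" by (simp add: card_mono)
        then show ?thesis using size2 big cTH by linarith
      qed
    qed
  qed
qed

end
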